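(* For every positive integer $n$, $$\sum_{k=1}^n(2k+1)M_k^2=\sum_{k=0}^{n+1}\frac{(4n-2k+3)(n+k+2)}{n+2}\binom{n+k+1}{2k}\binom{2k}{k}\binom{2k+1}{k}(-3)^{n+1-k}.$$
   Context: $M_n=\sum_{k=0}^{\lfloor n/2\rfloor}\binom{n}{2k}\frac{1}{k+1}\binom{2k}{k}$ is the $n$-th Motzkin number. *)

theory Defs
  imports Complex_Main
begin

text \<open>n-th Motzkin number, defined by the formula in the paper
  (computed over the rationals, as a literal reading of 1/(k+1)).\<close>
definition motzkin :: "nat \<Rightarrow> rat" where
  "motzkin n = (\<Sum>k = 0..n div 2. of_nat (n choose (2*k)) * (1 / of_nat (k+1)) * of_nat ((2*k) choose k))"

end

theory Submission
  imports Defs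
begin

definition ifac :: "nat \<Rightarrow> nat \<Rightarrow> rat" where
  "ifac a i = (if i \<le> a then 1 / fact (a - i) else 0)"

lemma prod_zero_big: "a < i \<Longrightarrow> (\<Prod>l<i. (of_nat a - of_nat l :: rat)) = 0"
  by (rule prod_zero) auto

lemma ifac_prod: "ifac a i = (\<Prod>l<i. (of_nat a - of_nat l)) / fact a"
proof (induction i)
  case 0 then show ?case by (simp add: ifac_def)
next
  case (Suc i)
  show ?case
  proof (cases "Suc i \<le> a")
    case True
    have e: "a - i = Suc (a - Suc i)" using True by simp
    have "fact (a - i) = (of_nat (a - i) :: rat) * fact (a - Suc i)"
      by (simp add: e)
    then have "ifac a (Suc i) = of_nat (a - i) * ifac a i"
      using True by (simp add: ifac_def field_simps)
    also have "of_nat (a - i) = (of_nat a - of_nat i :: rat)" using True by (simp add: of_nat_diff)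
    finally show ?thesis using Suc by simp
  next
    case False
    have "(\<Prod>l<Suc i. (of_nat a - of_nat l :: rat)) = 0"
      by (rule prod_zero_big) (use False in simp)
    then show ?thesis using False by (simp add: ifac_def)
  qed
qed

lemma ifac_shift: "ifac (x + c) (y + c) = ifac x y"
  by (simp add: ifac_def)

lemma ifac_sub: "y \<le> x \<Longrightarrow> ifac x (y + i) = ifac (x - y) i"
  by (auto simp add: ifac_def)

definition mt :: "nat \<Rightarrow> nat \<Rightarrow> rat" where
  "mt n k = of_nat (n choose (2*k)) * (1 / of_nat (k+1)) * of_nat ((2*k) choose k)"

lemma mt_fact: "mt N k = fact N * ifac N (2*k) / (fact k * fact (k+1))"
proof (cases "2*k \<le> N")
  case True
  have "mt N k = fact N / (fact (2*k) * fact (N - 2*k)) * (1 / of_nat (k+1)) * (fact (2*k) / (fact k * fact (2*k - k)))"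
    unfolding mt_def using True by (simp add: binomial_fact)
  also have "\<dots> = fact N * ifac N (2*k) / (fact k * fact (k+1))"
    using True by (simp add: ifac_def mult_2 divide_simps)
  finally show ?thesis .
next
  case False
  then show ?thesis by (simp add: mt_def ifac_def)
qed

lemma fact1: "(fact (n+1) :: rat) = of_nat (n+1) * fact n" by simp
lemma fact2: "(fact (n+2) :: rat) = of_nat (n+1) * of_nat (n+2) * fact n"
  by (simp add: numeral_2_eq_2 algebra_simps)

lemma nzA: "(of_nat n + numeral c :: rat) \<noteq> 0" "(numeral c + of_nat n :: rat) \<noteq> 0"
  "(of_nat n + 1 :: rat) \<noteq> 0" "(1 + of_nat n :: rat) \<noteq> 0"
  using of_nat_0_le_iff[of n, where 'a=rat] zero_less_numeral[of c, where 'a=rat] by linarith+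

definition HM :: "nat \<Rightarrow> nat \<Rightarrow> rat" where
  "HM n k = -4 * of_nat (n+1) * of_nat k * of_nat (k+1) * fact n * ifac (n+2) (2*k) / (fact k * fact (k+1))"

lemma mt_tele:
  "-3 * of_nat (n+1) * mt n k - (2 * of_nat n + 5) * mt (n+1) k + (of_nat n + 4) * mt (n+2) k
    = HM n (k+1) - HM n k"
proof (cases "2*k \<le> n+2")
  case True
  define b where "b = n + 2 - 2*k"
  have bq: "(of_nat b :: rat) = of_nat n + 2 - 2 * of_nat k" using True by (simp add: b_def of_nat_diff)
  have i0: "ifac n (2*k) = ifac b 2"
    using ifac_shift[of n 2 "2*k"] ifac_sub[OF True, of 2] by (simp add: b_def)
  have i1: "ifac (n+1) (2*k) = ifac b 1"
    using ifac_shift[of "n+1" 1 "2*k"] ifac_sub[OF True, of 1] by (simp add: b_def)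
  have i2: "ifac (n+2) (2*k) = ifac b 0"
    using ifac_sub[OF True, of 0] by (simp add: b_def)
  have i3: "ifac (n+2) (2*(k+1)) = ifac b 2"
    using ifac_sub[OF True, of 2] by (simp add: b_def)
  define X where "X = fact n / (fact b * fact k * fact (k+1) :: rat)"
  have fk2: "(fact (k+2) :: rat) = of_nat (k+2) * fact (k+1)"
    by (simp add: numeral_2_eq_2)
  have e0: "mt n k = X * ((of_nat n + 2 - 2 * of_nat k) * (of_nat n + 1 - 2 * of_nat k))"
    unfolding mt_fact unfolding i0 unfolding ifac_prod X_def by (simp del: fact_Suc add: bq numeral_2_eq_2 field_simps)
  have e1: "mt (n+1) k = X * (of_nat n + 1) * (of_nat n + 2 - 2 * of_nat k)"
    unfolding mt_fact unfolding i1 unfolding ifac_prod X_def by (simp del: fact_Suc add: bq fact_Suc[of n] field_simps)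
  have e2: "mt (n+2) k = X * (of_nat n + 1) * (of_nat n + 2)"
    unfolding mt_fact unfolding i2 unfolding ifac_prod X_def by (simp del: fact_Suc add: fact_Suc[of n] fact_Suc[of "Suc n"] field_simps)
  have h0: "HM n k = X * (-4 * (of_nat n+1) * of_nat k * (of_nat k + 1))"
    unfolding HM_def unfolding i2 unfolding ifac_prod X_def by (simp del: fact_Suc add: field_simps)
  have h1a: "HM n (k+1) = fact n / (fact b * fact (k+1) * fact (k+1)) * (of_nat k + 1) * (-4 * (of_nat n+1) * (of_nat n + 2 - 2 * of_nat k) * (of_nat n + 1 - 2 * of_nat k))"
    unfolding HM_def unfolding i3 unfolding ifac_prod apply (simp del: fact_Suc add: bq numeral_2_eq_2 fact_Suc[of "Suc k"])
    by (simp add: mult.assoc algebra_simps del: fact_Suc)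
  have xk: "fact n / (fact b * fact (k+1) * fact (k+1)) * (of_nat k + 1) = X"
  proof -
    have "(fact (k+1) :: rat) = (of_nat k + 1) * fact k" by simp
    then show ?thesis unfolding X_def
      by (simp add: divide_simps nzA)
  qed
  have h1: "HM n (k+1) = X * (-4 * (of_nat n+1) * (of_nat n + 2 - 2 * of_nat k) * (of_nat n + 1 - 2 * of_nat k))"
    by (subst h1a, subst xk, rule refl)
  show ?thesis unfolding e0 e1 e2 h0 h1 by (simp add: algebra_simps)
next
  case False
  then show ?thesis by (simp add: mt_fact HM_def ifac_def)
qed


lemma motz_ext: assumes "n div 2 \<le> K" shows "motzkin n = (\<Sum>k=0..K. mt n k)"
proof -
  have "motzkin n = (\<Sum>k=0..n div 2. mt n k)" by (simp add: motzkin_def mt_def)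
  also have "\<dots> = (\<Sum>k=0..K. mt n k)"
  proof (rule sum.mono_neutral_left)
    show "\<forall>i\<in>{0..K} - {0..n div 2}. mt n i = 0"
    proof
      fix i assume "i \<in> {0..K} - {0..n div 2}"
      then have "n < 2*i" by auto
      then show "mt n i = 0" by (simp add: mt_def binomial_eq_0)
    qed
  qed (use assms in auto)
  finally show ?thesis .
qed

lemma HM_0: "HM n 0 = 0" by (simp add: HM_def)
lemma HM_big: "HM n (Suc (Suc (Suc n))) = 0" by (simp add: HM_def ifac_def)

lemma Mrec: "(of_nat n + 4) * motzkin (n+2) = (2 * of_nat n + 5) * motzkin (n+1) + 3 * (of_nat n + 1) * motzkin n"
proof -
  have "(\<Sum>k=0..n+2. -3 * of_nat (n+1) * mt n k - (2 * of_nat n + 5) * mt (n+1) k + (of_nat n + 4) * mt (n+2) k)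
      = (\<Sum>k=0..n+2. HM n (Suc k) - HM n k)"
    using mt_tele by simp
  also have "\<dots> = 0" by (subst sum_Suc_diff) (simp_all add: HM_0 HM_big)
  finally have e: "(\<Sum>k=0..n+2. -3 * of_nat (n+1) * mt n k - (2 * of_nat n + 5) * mt (n+1) k + (of_nat n + 4) * mt (n+2) k) = 0" .
  have m0: "motzkin n = (\<Sum>k=0..n+2. mt n k)" by (rule motz_ext) simp
  have m1: "motzkin (n+1) = (\<Sum>k=0..n+2. mt (n+1) k)" by (rule motz_ext) simp
  have m2: "motzkin (n+2) = (\<Sum>k=0..n+2. mt (n+2) k)" by (rule motz_ext) simp
  from e have "(\<Sum>k=0..n+2. -3 * of_nat (n+1) * mt n k) - (\<Sum>k=0..n+2. (2 * of_nat n + 5) * mt (n+1) k) + (\<Sum>k=0..n+2. (of_nat n + 4) * mt (n+2) k) = 0"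
    by (simp only: sum.distrib sum_subtractf)
  then have "-3 * of_nat (n+1) * motzkin n - (2 * of_nat n + 5) * motzkin (n+1) + (of_nat n + 4) * motzkin (n+2) = 0"
    unfolding m0 m1 m2 by (simp only: sum_distrib_left)
  then show ?thesis by (simp add: algebra_simps)
qed


definition pp0 :: "rat \<Rightarrow> rat" where "pp0 x = (170100) + (388800)*x + (365769)*x^2 + (181251)*x^3 + (49896)*x^4 + (7236)*x^5 + (432)*x^6"
definition pp1 :: "rat \<Rightarrow> rat" where "pp1 x = (-106596) + (-250641)*x + (-244602)*x^2 + (-126105)*x^3 + (-36108)*x^4 + (-5436)*x^5 + (-336)*x^6"
definition pp2 :: "rat \<Rightarrow> rat" where "pp2 x = (-82944) + (-177300)*x + (-152433)*x^2 + (-67939)*x^3 + (-16640)*x^4 + (-2132)*x^5 + (-112)*x^6"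
definition pp3 :: "rat \<Rightarrow> rat" where "pp3 x = (16500) + (34325)*x + (28450)*x^2 + (12089)*x^3 + (2788)*x^4 + (332)*x^5 + (16)*x^6"
definition q2 :: "rat \<Rightarrow> rat \<Rightarrow> rat" where "q2 x y = (-83790) + (-33075)*y + (4410)*y^2 + (-176211)*x + (-50260)*x*y + (6244)*x*y^2 + (-152398)*x^2 + (-29832)*x^2*y + (3272)*x^2*y^2 + (-69388)*x^3 + (-8608)*x^3*y + (752)*x^3*y^2 + (-17544)*x^4 + (-1200)*x^4*y + (64)*x^4*y^2 + (-2336)*x^5 + (-64)*x^5*y + (-128)*x^6"
definition pre :: "rat \<Rightarrow> rat \<Rightarrow> rat" where "pre x y = (4*x - 2*y + 3) * (x + y + 2) / (x + 2)"
definition ca :: "rat \<Rightarrow> rat" where "ca w = -(81 + 198*w + 153*w^2 + 36*w^3)/4"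
definition cb :: "rat \<Rightarrow> rat" where "cb w = 63/2 + 60*w + 69/2*w^2 + 6*w^3"
definition cc :: "rat \<Rightarrow> rat" where "cc w = -(45/4 + 33/2*w + 29/4*w^2 + w^3)"

lemma stepB:
  fixes w x y :: rat
  assumes "w \<ge> 0"
  shows "ca w * x^2 + cb w * x * y + cc w * y^2 + (2*w+3) * y^2
    = ca (w+1) * y^2 + cb (w+1) * y * (((2*w+5)*y + 3*(w+1)*x)/(w+4)) + cc (w+1) * (((2*w+5)*y + 3*(w+1)*x)/(w+4))^2"
proof -
  have "w + 4 \<noteq> 0" using assms by linarith
  then show ?thesis unfolding ca_def cb_def cc_def by (simp add: divide_simps) algebra
qed

lemma stepD:
  fixes w u v m2 m3 :: rat
  assumes w: "w \<ge> 0"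
  and h2: "m2 = ((2*w+5)*v + 3*(w+1)*u)/(w+4)"
  and h3: "m3 = ((2*w+7)*m2 + 3*(w+2)*v)/(w+5)"
  shows "(pp0 w + pp1 w + pp2 w + pp3 w) * (ca w * u^2 + cb w * u * v + cc w * v^2)
     + (pp1 w + pp2 w + pp3 w) * (2*w+3) * v^2 + (pp2 w + pp3 w) * (2*w+5) * m2^2 + pp3 w * (2*w+7) * m3^2 = 0"
proof -
  have "w + 4 \<noteq> 0" "w + 5 \<noteq> 0" using w by linarith+
  then show ?thesis unfolding h3 unfolding h2 ca_def cb_def cc_def pp0_def pp1_def pp2_def pp3_def
    by (simp add: divide_simps) algebra
qed
lemma poly_id: fixes x y :: rat shows "pp0 x*(4*(x+0)-2*y+3)*(x+0+y+2)*(-1)*((x+4-y)*(x+3-y)*(x+2-y))*(x+3)*(x+4)*(x+5) + pp1 x*(4*(x+1)-2*y+3)*(x+1+y+2)*3*(x+y+2)*((x+4-y)*(x+3-y))*(x+2)*(x+4)*(x+5) + pp2 x*(4*(x+2)-2*y+3)*(x+2+y+2)*(-9)*(x+y+2)*(x+y+3)*(x+4-y)*(x+2)*(x+3)*(x+5) + pp3 x*(4*(x+3)-2*y+3)*(x+3+y+2)*27*((x+y+2)*(x+y+3)*(x+y+4))*(x+2)*(x+3)*(x+4) = (-36*(2*x+3)*(x+y+2)*(x+4-y)*(2*y+3)*q2 x (y+1) - 54*(2*x+3)*y^2*(y+1)*q2 x y)*(x+2)*(x+3)*(x+4)*(x+5)"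
  unfolding pp0_def pp1_def pp2_def pp3_def q2_def by algebra

lemma key_rat:
  fixes x y :: rat
  assumes x: "x \<ge> 0"
  shows "pp0 x * (pre x y * (-1/27) * ((x+4-y)*(x+3-y)*(x+2-y)))
       + pp1 x * (pre (x+1) y * (1/9) * (x+y+2) * ((x+4-y)*(x+3-y)))
       + pp2 x * (pre (x+2) y * (-1/3) * (x+y+2)*(x+y+3) * (x+4-y))
       + pp3 x * (pre (x+3) y * ((x+y+2)*(x+y+3)*(x+y+4)))
     = -(4/3)*(2*x+3)*(x+y+2)*(x+4-y)*(2*y+3) * q2 x (y+1) - 2*(2*x+3)*y^2*(y+1)*q2 x y"
proof -
  have h: "x + 2 \<noteq> 0" "x + 1 + 2 \<noteq> 0" "x + 2 + 2 \<noteq> 0" "x + 3 + 2 \<noteq> 0" using x by linarith+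
  show ?thesis unfolding pre_def
    using h poly_id[of x y] by (simp add: divide_simps) algebra
qed

definition tt :: "nat \<Rightarrow> nat \<Rightarrow> rat" where
  "tt n k = ((4 * of_nat n - 2 * of_nat k + 3) * (of_nat n + of_nat k + 2) / (of_nat n + 2))
        * of_nat ((n+k+1) choose (2*k)) * of_nat ((2*k) choose k) * of_nat ((2*k+1) choose k)
        * (-3 :: rat) ^ (n + 1 - k)"

lemma fact_plus: "(fact (m + j) :: rat) = fact m * (\<Prod>i<j. of_nat (m + 1 + i))"
  by (induction j) (simp_all add: algebra_simps)

lemma pow_ifac: "(c::rat) \<noteq> 0 \<Longrightarrow> c ^ (a - i) * ifac a i = ifac a i * c ^ a * (1/c) ^ i"
  by (cases "i \<le> a") (simp_all add: ifac_def power_diff power_one_over)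

lemma tt_fact: "tt N k = pre (of_nat N) (of_nat k) * (-3) ^ (N+1-k) * fact (N+k+1) * ifac (N+1) k
   * fact (2*k+1) / (fact k ^ 3 * fact (k+1))"
proof (cases "k \<le> N+1")
  case True
  have e: "N + k + 1 - 2*k = N + 1 - k" using True by arith
  have b1: "of_nat ((N+k+1) choose (2*k)) = (fact (N+k+1) / (fact (2*k) * fact (N+1-k)) :: rat)"
    using True by (simp add: binomial_fact e)
  have b2: "of_nat ((2*k) choose k) = (fact (2*k) / (fact k * fact k) :: rat)"
    by (subst binomial_fact) simp_all
  have b3: "of_nat ((2*k+1) choose k) = (fact (2*k+1) / (fact k * fact (k+1)) :: rat)"
  proof -
    have e3: "2*k+1-k = k+1" by arith
    show ?thesis by (simp add: binomial_fact e3)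
  qed
  have pr: "(4 * of_nat N - 2 * of_nat k + 3) * (of_nat N + of_nat k + 2) / (of_nat N + 2) = pre (of_nat N) (of_nat k)"
    by (simp add: pre_def)
  show ?thesis unfolding tt_def b1 b2 b3 pr using True
    by (simp del: fact_Suc add: ifac_def field_simps power3_eq_cube)
next
  case False
  then have "(N+k+1) choose (2*k) = 0" by (simp add: binomial_eq_0)
  then show ?thesis using False by (simp add: tt_def ifac_def)
qed

definition Yb :: "nat \<Rightarrow> nat \<Rightarrow> rat" where
  "Yb n k = (-3) ^ (n+4-k) * fact (n+k+1) * fact (2*k+1) / (fact (n+4-k) * fact k ^ 3 * fact (k+1))"

definition Bg :: "nat \<Rightarrow> nat \<Rightarrow> rat" where
  "Bg n k = (-3) ^ (n+4-k) * fact (n+k+1) * ifac (n+4) k * fact (2*k+1) / (fact k ^ 3 * fact (k+1))"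

lemma Bg_Y: "k \<le> n+4 \<Longrightarrow> Bg n k = Yb n k"
  by (simp del: fact_Suc add: Bg_def Yb_def ifac_def)

lemma Bg_zero: "n+4 < k \<Longrightarrow> Bg n k = 0"
  by (simp add: Bg_def ifac_def)

lemma tt_shift:
  assumes k: "k \<le> n+4" and j: "j \<le> 3"
  shows "tt (n+j) k = Yb n k * (pre (of_nat n + of_nat j) (of_nat k) * (-1/3)^(3-j)
     * (\<Prod>i<j. of_nat (n+k+2+i)) * (\<Prod>l<3-j. (of_nat (n+4-k) - of_nat l)))"
proof -
  define a where "a = n+4-k"
  have i: "ifac (n+j+1) k = ifac a (3-j)"
  proof -
    have "ifac (n+j+1) k = ifac (n+j+1 + (3-j)) (k + (3-j))" by (rule ifac_shift[symmetric])
    also have "n+j+1 + (3-j) = n+4" using j by simp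
    also have "ifac (n+4) (k + (3-j)) = ifac a (3-j)" unfolding a_def using k by (rule ifac_sub)
    finally show ?thesis .
  qed
  have p: "n+j+1-k = a - (3-j)" unfolding a_def using j k by arith
  have f: "(fact (n+j+k+1) :: rat) = fact (n+k+1) * (\<Prod>i<j. of_nat (n+k+2+i))"
    using fact_plus[of "n+k+1" j] by (simp add: algebra_simps)
  have pw: "(-3::rat) ^ (a - (3-j)) * ifac a (3-j) = ifac a (3-j) * (-3) ^ a * (-1/3) ^ (3-j)"
    using pow_ifac[of "-3::rat" a "3-j"] by simp
  have "tt (n+j) k = pre (of_nat (n+j)) (of_nat k) * ((-3) ^ (a - (3-j)) * ifac a (3-j)) * fact (n+j+k+1)
      * fact (2*k+1) / (fact k ^ 3 * fact (k+1))"
    unfolding tt_fact p[symmetric] i[symmetric] by (simp add: algebra_simps)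
  also have "\<dots> = pre (of_nat n + of_nat j) (of_nat k) * ((\<Prod>l<3-j. (of_nat a - of_nat l)) / fact a * (-3) ^ a * (-1/3) ^ (3-j))
      * (fact (n+k+1) * (\<Prod>i<j. of_nat (n+k+2+i))) * fact (2*k+1) / (fact k ^ 3 * fact (k+1))"
    unfolding pw unfolding f unfolding ifac_prod by simp
  also have "\<dots> = Yb n k * (pre (of_nat n + of_nat j) (of_nat k) * (-1/3)^(3-j)
     * (\<Prod>i<j. of_nat (n+k+2+i)) * (\<Prod>l<3-j. (of_nat (n+4-k) - of_nat l)))"
    unfolding Yb_def a_def[symmetric] by (simp del: fact_Suc add: field_simps)
  finally show ?thesis .
qed


lemma Bg_succ:
  assumes k: "k \<le> n+4"
  shows "Bg n (k+1) = Yb n k * ((-1/3) * (of_nat n + of_nat k + 2) * (of_nat n + 4 - of_nat k)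
     * (2 * of_nat k + 2) * (2 * of_nat k + 3) / ((of_nat k + 1)^3 * (of_nat k + 2)))"
proof (cases "k = n+4")
  case True
  then show ?thesis by (simp add: Bg_zero)
next
  case False
  then have k1: "k+1 \<le> n+4" using k by simp
  obtain a where a: "n+4-k = Suc a" using False k by (metis Suc_diff_Suc le_neq_implies_less add_Suc_right)
  have a1: "n+4-(k+1) = a" using a by simp
  have ax: "(of_nat a :: rat) = of_nat n + 3 - of_nat k"
  proof -
    have "of_nat (n+4-k) = (of_nat n + 4 - of_nat k :: rat)" using k by (simp add: of_nat_diff)
    then show ?thesis using a by simp
  qed
  have e1: "(fact (n + (k+1) + 1) :: rat) = (of_nat n + of_nat k + 2) * fact (n+k+1)"
    by (simp add: algebra_simps)
  have e2: "(fact (2*(k+1)+1) :: rat) = (2 * of_nat k + 2) * (2 * of_nat k + 3) * fact (2*k+1)"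
    by (simp add: algebra_simps)
  have e3: "(fact (k+1) :: rat) = (of_nat k + 1) * fact k" by simp
  have e4: "(fact (k+1+1) :: rat) = (of_nat k + 2) * (of_nat k + 1) * fact k" by (simp add: algebra_simps)
  have e5: "(fact (Suc a) :: rat) = (of_nat n + 4 - of_nat k) * fact a" by (simp add: ax algebra_simps)
  have "(of_nat k::rat) < of_nat (n+4)" using False k by (simp only: of_nat_less_iff)
  then have nk: "(of_nat n + 4 :: rat) \<noteq> of_nat k" by simp
  show ?thesis
    unfolding Bg_Y[OF k1] Yb_def a a1 e1 e2 e3 e4 e5
    using nk by (simp del: fact_Suc add: divide_simps nzA)
qed

definition GG :: "nat \<Rightarrow> nat \<Rightarrow> rat" where
  "GG n k = 2*(2*of_nat n+3) * of_nat k^2 * (of_nat k+1) * q2 (of_nat n) (of_nat k) * Bg n k"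

lemma tt_zero: "N+1 < k \<Longrightarrow> tt N k = 0"
  by (simp add: tt_fact ifac_def)

lemma tele_R:
  "pp0 (of_nat n) * tt n k + pp1 (of_nat n) * tt (n+1) k + pp2 (of_nat n) * tt (n+2) k + pp3 (of_nat n) * tt (n+3) k
    = GG n (k+1) - GG n k"
proof (cases "k \<le> n+4")
  case True
  define x where "x = (of_nat n :: rat)"
  define y where "y = (of_nat k :: rat)"
  have x0: "x \<ge> 0" unfolding x_def by simp
  have ak: "(of_nat (n+4-k) :: rat) = x + 4 - y" unfolding x_def y_def using True by (simp add: of_nat_diff)
  have t0: "tt n k = Yb n k * (pre x y * (-1/27) * ((x+4-y)*(x+3-y)*(x+2-y)))"
    using tt_shift[OF True, of 0] by (simp add: ak numeral_3_eq_3 x_def[symmetric] y_def[symmetric] algebra_simps)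
  have t1: "tt (n+1) k = Yb n k * (pre (x+1) y * (1/9) * (x+y+2) * ((x+4-y)*(x+3-y)))"
    using tt_shift[OF True, of 1] by (simp add: ak numeral_2_eq_2 numeral_3_eq_3 x_def[symmetric] y_def[symmetric] algebra_simps)
  have t2: "tt (n+2) k = Yb n k * (pre (x+2) y * (-1/3) * (x+y+2)*(x+y+3) * (x+4-y))"
    using tt_shift[OF True, of 2] apply (simp add: ak numeral_2_eq_2 numeral_3_eq_3 x_def[symmetric] y_def[symmetric])
    by (simp add: add_ac)
  have t3: "tt (n+3) k = Yb n k * (pre (x+3) y * ((x+y+2)*(x+y+3)*(x+y+4)))"
    using tt_shift[OF True, of 3] by (simp add: ak numeral_2_eq_2 numeral_3_eq_3 x_def[symmetric] y_def[symmetric] algebra_simps)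
  have g0: "GG n k = Yb n k * (2*(2*x+3)*y^2*(y+1)*q2 x y)"
    unfolding GG_def Bg_Y[OF True] x_def y_def by (simp add: algebra_simps)
  have g1: "GG n (k+1) = Yb n k * (-(4/3)*(2*x+3)*(x+y+2)*(x+4-y)*(2*y+3) * q2 x (y+1))"
  proof -
    have "GG n (k+1) = 2*(2*x+3) * (y+1)^2 * (y+2) * q2 x (y+1) * Bg n (k+1)"
      unfolding GG_def x_def y_def by (simp add: algebra_simps)
    also have "\<dots> = Yb n k * (-(4/3)*(2*x+3)*(x+y+2)*(x+4-y)*(2*y+3) * q2 x (y+1))"
      unfolding Bg_succ[OF True] x_def[symmetric] y_def[symmetric]
      using nzA[where n=k] unfolding y_def[symmetric]
      by (simp add: divide_simps) (simp add: algebra_simps power2_eq_square power3_eq_cube)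
    finally show ?thesis .
  qed
  show ?thesis
  proof -
    have "pp0 x * tt n k + pp1 x * tt (n+1) k + pp2 x * tt (n+2) k + pp3 x * tt (n+3) k = GG n (k+1) - GG n k"
      unfolding t0 t1 t2 t3 g0 g1 using key_rat[OF x0, of y] by algebra
    then show ?thesis unfolding x_def .
  qed
next
  case False
  then show ?thesis by (simp add: tt_zero GG_def Bg_zero)
qed


definition Rs :: "nat \<Rightarrow> rat" where "Rs N = (\<Sum>k=0..N+1. tt N k)"

lemma R_ext: assumes "N+1 \<le> K" shows "Rs N = (\<Sum>k=0..K. tt N k)"
  unfolding Rs_def
proof (rule sum.mono_neutral_left)
  show "\<forall>i\<in>{0..K} - {0..N+1}. tt N i = 0" by (auto intro: tt_zero)
qed (use assms in auto)

lemma GG_0: "GG n 0 = 0" by (simp add: GG_def)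
lemma GG_big: "GG n (Suc (n+4)) = 0" by (simp add: GG_def Bg_zero)

lemma Rrec: "pp0 (of_nat n) * Rs n + pp1 (of_nat n) * Rs (n+1) + pp2 (of_nat n) * Rs (n+2) + pp3 (of_nat n) * Rs (n+3) = 0"
proof -
  have "(\<Sum>k=0..n+4. pp0 (of_nat n) * tt n k + pp1 (of_nat n) * tt (n+1) k + pp2 (of_nat n) * tt (n+2) k + pp3 (of_nat n) * tt (n+3) k)
      = (\<Sum>k=0..n+4. GG n (Suc k) - GG n k)"
    using tele_R by simp
  also have "\<dots> = GG n (Suc (n+4)) - GG n 0" by (rule sum_Suc_diff) simp
  also have "\<dots> = 0" by (simp only: GG_0 GG_big)
  finally have e: "(\<Sum>k=0..n+4. pp0 (of_nat n) * tt n k + pp1 (of_nat n) * tt (n+1) k + pp2 (of_nat n) * tt (n+2) k + pp3 (of_nat n) * tt (n+3) k) = 0" .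
  have r0: "Rs n = (\<Sum>k=0..n+4. tt n k)" by (rule R_ext) simp
  have r1: "Rs (n+1) = (\<Sum>k=0..n+4. tt (n+1) k)" by (rule R_ext) simp
  have r2: "Rs (n+2) = (\<Sum>k=0..n+4. tt (n+2) k)" by (rule R_ext) simp
  have r3: "Rs (n+3) = (\<Sum>k=0..n+4. tt (n+3) k)" by (rule R_ext) simp
  from e show ?thesis
    unfolding r0 r1 r2 r3 by (simp only: sum.distrib sum_distrib_left)
qed

definition Lsum :: "nat \<Rightarrow> rat" where "Lsum n = (\<Sum>k = 1..n. (2 * of_nat k + 1) * (motzkin k)^2)"

definition Sf :: "nat \<Rightarrow> rat" where
  "Sf n = ca (of_nat n) * (motzkin n)^2 + cb (of_nat n) * motzkin n * motzkin (n+1) + cc (of_nat n) * (motzkin (n+1))^2"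

lemma M2eq: "motzkin (n+2) = ((2 * of_nat n + 5) * motzkin (n+1) + 3 * (of_nat n + 1) * motzkin n) / (of_nat n + 4)"
  using Mrec[of n] by (simp add: field_simps nzA)

lemma Lsum_Suc: "Lsum (Suc n) = Lsum n + (2 * of_nat n + 3) * (motzkin (n+1))^2"
  unfolding Lsum_def by (simp add: algebra_simps)

lemma motz01: "motzkin 0 = 1" "motzkin 1 = 1" "motzkin (Suc 0) = 1"
  by (simp_all add: motzkin_def)

lemma L_closed: "Lsum n = Sf n"
proof (induction n)
  case 0
  show ?case by (simp add: Lsum_def Sf_def motz01 ca_def cb_def cc_def)
next
  case (Suc n)
  have w: "(of_nat n :: rat) \<ge> 0" by simp
  have "Lsum (Suc n) = Sf n + (2 * of_nat n + 3) * (motzkin (n+1))^2" using Suc Lsum_Suc by simp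
  also have "\<dots> = Sf (Suc n)"
    unfolding Sf_def using stepB[OF w, of "motzkin n" "motzkin (n+1)"] M2eq[of n]
    by (simp add: add_ac)
  finally show ?case .
qed

lemma L_rec: "pp0 (of_nat n) * Lsum n + pp1 (of_nat n) * Lsum (n+1) + pp2 (of_nat n) * Lsum (n+2) + pp3 (of_nat n) * Lsum (n+3) = 0"
proof -
  define w where "w = (of_nat n :: rat)"
  have w0: "w \<ge> 0" unfolding w_def by simp
  define u where "u = motzkin n"
  define v where "v = motzkin (n+1)"
  have m2: "motzkin (n+2) = ((2*w+5)*v + 3*(w+1)*u)/(w+4)" unfolding u_def v_def w_def by (rule M2eq)
  have m3: "motzkin (n+3) = ((2*w+7)*motzkin (n+2) + 3*(w+2)*v)/(w+5)"
    using M2eq[of "n+1"] unfolding v_def w_def by (simp add: algebra_simps eval_nat_numeral)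
  have l1: "Lsum (n+1) = Lsum n + (2*w+3) * v^2" using Lsum_Suc[of n] unfolding w_def v_def by simp
  have l2: "Lsum (n+2) = Lsum (n+1) + (2*w+5) * (motzkin (n+2))^2" using Lsum_Suc[of "n+1"] unfolding w_def
    by (simp add: algebra_simps)
  have l3: "Lsum (n+3) = Lsum (n+2) + (2*w+7) * (motzkin (n+3))^2" using Lsum_Suc[of "n+2"] unfolding w_def
    by (simp add: algebra_simps eval_nat_numeral)
  have l0: "Lsum n = ca w * u^2 + cb w * u * v + cc w * v^2" unfolding L_closed Sf_def u_def v_def w_def by simp
  have "pp0 w * Lsum n + pp1 w * Lsum (n+1) + pp2 w * Lsum (n+2) + pp3 w * Lsum (n+3) = 0"
    unfolding l3 l2 l1 l0 using stepD[OF w0 m2 m3] by algebra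
  then show ?thesis unfolding w_def .
qed


lemma base0: "Lsum 0 = Rs 0"
  by (simp add: Lsum_def Rs_def tt_def eval_nat_numeral binomial_Suc_Suc)

lemma base1: "Lsum 1 = Rs 1"
  by (simp add: Lsum_def Rs_def tt_def motzkin_def eval_nat_numeral binomial_Suc_Suc)

lemma base2: "Lsum 2 = Rs 2"
  by (simp add: Lsum_def Rs_def tt_def motzkin_def eval_nat_numeral binomial_Suc_Suc)

lemma pp3_pos: "pp3 (of_nat m) > 0"
  unfolding pp3_def by (intro add_pos_nonneg mult_nonneg_nonneg zero_le_power) simp_all

lemma main_eq: "Lsum n = Rs n"
proof (induction n rule: less_induct)
  case (less n)
  show ?case
  proof (cases "n < 3")
    case True
    then have "n = 0 \<or> n = 1 \<or> n = 2" by auto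
    then show ?thesis using base0 base1 base2 by auto
  next
    case False
    then obtain m where m: "n = m + 3" by (metis add.commute le_Suc_ex not_less)
    have i0: "Lsum m = Rs m" using less m by simp
    have i1: "Lsum (m+1) = Rs (m+1)" using less m by simp
    have i2: "Lsum (m+2) = Rs (m+2)" using less m by simp
    have "pp3 (of_nat m) * Lsum (m+3) = pp3 (of_nat m) * Rs (m+3)"
      using Rrec[of m] L_rec[of m] i0 i1 i2 by algebra
    then show ?thesis using pp3_pos[of m] m by simp
  qed
qed

theorem lemma2p2:
  fixes n :: nat
  assumes "n \<ge> 1"
  shows "(\<Sum>k = 1..n. (2 * of_nat k + 1) * (motzkin k)^2) =
    (\<Sum>k = 0..n+1. ((4 * of_nat n - 2 * of_nat k + 3) * (of_nat n + of_nat k + 2) / (of_nat n + 2))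
        * of_nat ((n+k+1) choose (2*k)) * of_nat ((2*k) choose k) * of_nat ((2*k+1) choose k)
        * (-3 :: rat) ^ (n + 1 - k))"
  using main_eq[of n] unfolding Lsum_def Rs_def tt_def .

end
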